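(* Let $\alpha>2$, $\phi_1>0$, $\theta>0$, $\mu\in[0,1]$ and $a_1,a_2>0$. Let $h,h_1,h_2$ be i.i.d. exponential random variables with unit mean, independent of a nonnegative random variable $I_{o,1}$ whose Laplace transform is $$\mathcal{L}_{I_{o,1}}(s)=\mathbb{E}\big[e^{-sI_{o,1}}\big]=\exp\!\Big(-\phi_1\,\Gamma\big(1+\tfrac{2}{\alpha}\big)\Gamma\big(1-\tfrac{2}{\alpha}\big)\,s^{2/\alpha}\Big),\quad s\ge 0.$$ Define $$\mathrm{SIR}^r_{1,1}=\frac{h}{I_{o,1}},\qquad \mathrm{SIR}^r_{1,2}=\frac{a_1\max(h_1,h_2)}{I_{o,1}+a_2\min(h_1,h_2)},\qquad \mathrm{SIR}^r_{2,2}=\frac{a_2\min(h_1,h_2)}{I_{o,1}+\mu a_1\max(h_1,h_2)},$$ and $p^r_{j,u}=\Pr(\mathrm{SIR}^r_{j,u}>\theta)$. Then $$p^r_{1,1}=\mathcal{L}_{I_{o,1}}(\theta),$$ $$p^r_{1,2}=\begin{cases}\dfrac{2a_1}{a_1+\theta a_2}\mathcal{L}_{I_{o,1}}\big(\tfrac{\theta}{a_1}\big)-\dfrac{a_1-\theta a_2}{a_1+\theta a_2}\mathcal{L}_{I_{o,1}}\Big(\dfrac{2\theta}{a_1-\theta a_2}\Big), & \text{if } 0\le \tfrac{\theta a_2}{a_1}<1,\\[2mm] \dfrac{2a_1}{a_1+\theta a_2}\mathcal{L}_{I_{o,1}}\big(\tfrac{\theta}{a_1}\big), & \text{if } \tfrac{\theta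 a_2}{a_1}\ge 1,\end{cases}$$ $$p^r_{2,2}=\begin{cases}\dfrac{a_2-\theta\mu a_1}{a_2+\theta\mu a_1}\mathcal{L}_{I_{o,1}}\Big(\dfrac{2\theta}{a_2-\theta\mu a_1}\Big), & \text{if } 0\le \tfrac{\theta\mu a_1}{a_2}<1,\\[2mm] 0, & \text{if } \tfrac{\theta\mu a_1}{a_2}\ge 1.\end{cases}$$
   Context: Model: in an interference-limited uplink, machine-type devices (MTDs) transmit to an aggregator over orthogonal channels; under random resource scheduling (RRS) at most two MTDs share a channel. $h$ is the channel power gain of an MTD alone on its channel; $h_1,h_2$ are the channel power gains of two MTDs sharing a channel, decoded by successive interference cancellation (stronger first), with power coefficients $a_1,a_2$ (in the paper $a_1+a_2=\delta$ is fixed); $\mu$ models residual interference from imperfect cancellation; $I_{o,1}$ is the normalized interference from outside the aggregation area. $p^r_{j,u}$ is the success probability of the $j$-th decoded MTD on a channel occupied by $u$ MTDs. *)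

theory Defs
  imports "HOL-Probability.Probability"
begin

definition LI :: "real \<Rightarrow> real \<Rightarrow> real \<Rightarrow> real" where
  "LI \<alpha> \<phi>1 s = exp (- \<phi>1 * Gamma (1 + 2 / \<alpha>) * Gamma (1 - 2 / \<alpha>) * s powr (2 / \<alpha>))"

end

theory Submission
  imports Defs
begin

abbreviation E1 :: "real measure" where "E1 \<equiv> density lborel (exponential_density 1)"

lemma exp_tail:
  assumes "0 < k" "0 \<le> t"
  shows "emeasure (density lborel (exponential_density k)) {t<..} = ennreal (exp (- t * k))"
proof -
  interpret P: prob_space "density lborel (exponential_density k)"
    using prob_space_exponential_density[OF assms(1)] .
  have D: "distributed (density lborel (exponential_density k)) lborel (\<lambda>x. x) (exponential_density k)"
    unfolding distributed_def using assms
    by (auto simp: distr_id2 exponential_density_def)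
  have "P.prob {x \<in> space (density lborel (exponential_density k)). t < x} = exp (- t * k)"
    using P.exponential_distributedD_gt[OF D assms(2) assms(1)] by simp
  moreover have "{x \<in> space (density lborel (exponential_density k)). t < x} = {t<..}" by auto
  ultimately show ?thesis by (simp add: P.emeasure_eq_measure)
qed

lemma int_exp_tail:
  assumes "0 < k" "0 \<le> t"
  shows "(\<integral>\<^sup>+ x. ennreal (exp (- k * x)) * indicator {t<..} x \<partial>lborel) = ennreal (exp (- k * t) / k)"
proof -
  have "emeasure (density lborel (exponential_density k)) {t<..} =
     (\<integral>\<^sup>+ x. ennreal (exponential_density k x) * indicator {t<..} x \<partial>lborel)"
    by (simp add: emeasure_density)
  also have "\<dots> = (\<integral>\<^sup>+ x. ennreal k * (ennreal (exp (- k * x)) * indicator {t<..} x) \<partial>lborel)"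
    using assms
    by (intro nn_integral_cong) (auto simp: exponential_density_def ennreal_mult' mult.commute split: split_indicator)
  also have "\<dots> = ennreal k * (\<integral>\<^sup>+ x. ennreal (exp (- k * x)) * indicator {t<..} x \<partial>lborel)"
    by (simp add: nn_integral_cmult)
  finally have "ennreal k * (\<integral>\<^sup>+ x. ennreal (exp (- k * x)) * indicator {t<..} x \<partial>lborel) = ennreal (exp (- t * k))"
    using exp_tail[OF assms] by simp
  then have "(\<integral>\<^sup>+ x. ennreal (exp (- k * x)) * indicator {t<..} x \<partial>lborel) = ennreal (exp (- t * k)) / ennreal k"
    using assms by (metis ennreal_eq_0_iff ennreal_neq_top linorder_not_le mult.commute ennreal_mult_divide_eq)
  also have "\<dots> = ennreal (exp (- k * t) / k)"
    using assms by (simp add: divide_ennreal mult.commute)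
  finally show ?thesis .
qed

lemma E1_prob: "prob_space E1"
  by (rule prob_space_exponential_density) simp

lemma sets_E1[measurable_cong]: "sets E1 = sets borel"
  by simp

lemma G_lemma:
  assumes "0 \<le> \<beta>" "0 \<le> \<gamma>" "0 \<le> \<alpha> + \<beta> * \<gamma>"
  shows "emeasure (E1 \<Otimes>\<^sub>M E1) {p. fst p > \<alpha> + \<beta> * snd p \<and> snd p > \<gamma>}
    = ennreal (exp (- \<alpha>) * exp (- (1 + \<beta>) * \<gamma>) / (1 + \<beta>))"
proof -
  interpret P1: prob_space E1 by (rule E1_prob)
  interpret PP: pair_sigma_finite E1 E1 ..
  let ?A = "{p. fst p > \<alpha> + \<beta> * snd p \<and> snd p > \<gamma>}"
  have meas: "?A \<in> sets (E1 \<Otimes>\<^sub>M E1)"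
  proof -
    have "?A = {p \<in> space (borel \<Otimes>\<^sub>M borel). fst p > \<alpha> + \<beta> * snd p \<and> snd p > (\<gamma>::real)}"
      by (simp add: space_pair_measure)
    also have "\<dots> \<in> sets (borel \<Otimes>\<^sub>M borel)" by measurable
    finally show ?thesis by (simp cong: sets_pair_measure_cong)
  qed
  have "emeasure (E1 \<Otimes>\<^sub>M E1) ?A = (\<integral>\<^sup>+y. emeasure E1 ((\<lambda>x. (x, y)) -` ?A) \<partial>E1)"
    by (rule PP.emeasure_pair_measure_alt2[OF meas])
  also have "\<dots> = (\<integral>\<^sup>+y. ennreal (exp (- (\<alpha> + \<beta> * y))) * indicator {\<gamma><..} y \<partial>E1)"
  proof (intro nn_integral_cong)
    fix y :: real
    show "emeasure E1 ((\<lambda>x. (x, y)) -` ?A) = ennreal (exp (- (\<alpha> + \<beta> * y))) * indicator {\<gamma><..} y"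
    proof (cases "y > \<gamma>")
      case True
      then have "(\<lambda>x. (x, y)) -` ?A = {\<alpha> + \<beta> * y<..}" by auto
      moreover have "0 \<le> \<alpha> + \<beta> * y" using assms True
        by (smt (verit, best) mult_left_mono)
      ultimately show ?thesis using True exp_tail[of 1 "\<alpha> + \<beta> * y"] by simp
    next
      case False
      then have "(\<lambda>x. (x, y)) -` ?A = {}" by auto
      then show ?thesis using False by simp
    qed
  qed
  also have "\<dots> = (\<integral>\<^sup>+y. ennreal (exponential_density 1 y) * (ennreal (exp (- (\<alpha> + \<beta> * y))) * indicator {\<gamma><..} y) \<partial>lborel)"
    by (subst nn_integral_density) auto
  also have "\<dots> = (\<integral>\<^sup>+y. ennreal (exp (- \<alpha>)) * (ennreal (exp (- (1 + \<beta>) * y)) * indicator {\<gamma><..} y) \<partial>lborel)"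
  proof (intro nn_integral_cong)
    fix y :: real
    show "ennreal (exponential_density 1 y) * (ennreal (exp (- (\<alpha> + \<beta> * y))) * indicator {\<gamma><..} y) =
      ennreal (exp (- \<alpha>)) * (ennreal (exp (- (1 + \<beta>) * y)) * indicator {\<gamma><..} y)"
    proof (cases "y > \<gamma>")
      case True
      then have "exp (- y) * exp (- (\<alpha> + \<beta> * y)) = exp (- \<alpha>) * exp (- (1 + \<beta>) * y)"
        by (simp add: exp_add[symmetric] algebra_simps)
      then show ?thesis using True assms
        by (simp add: exponential_density_def ennreal_mult'[symmetric] mult.assoc[symmetric])
    qed simp
  qed
  also have "\<dots> = ennreal (exp (- \<alpha>)) * ennreal (exp (- (1 + \<beta>) * \<gamma>) / (1 + \<beta>))"
    using assms int_exp_tail[of "1+\<beta>" \<gamma>] by (simp add: nn_integral_cmult)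
  also have "\<dots> = ennreal (exp (- \<alpha>) * exp (- (1 + \<beta>) * \<gamma>) / (1 + \<beta>))"
    using assms by (simp add: ennreal_mult'[symmetric])
  finally show ?thesis .
qed

lemma E1_null_pts:
  assumes "finite F"
  shows "{..0} \<union> F \<in> null_sets E1"
proof -
  have "AE x in lborel. x \<notin> insert 0 F"
    using assms
  proof (induction F)
    case empty then show ?case using AE_lborel_singleton[of 0] by simp
  next
    case (insert a F)
    show ?case using insert.IH AE_lborel_singleton[of a] by eventually_elim auto
  qed
  then have "AE x in lborel. x \<in> {..0} \<union> F \<longrightarrow> ennreal (exponential_density 1 x) = 0"
    by eventually_elim (auto simp: exponential_density_def)
  then show ?thesis
    using assms by (subst null_sets_density_iff) (auto intro!: sets.Un, metis finite_imp_null_set_lborel null_setsD2 sets_lborel)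
qed

lemma sets_EE: "sets (E1 \<Otimes>\<^sub>M E1) = sets (borel \<Otimes>\<^sub>M borel)"
  by (simp cong: sets_pair_measure_cong)

lemma space_EE: "space (E1 \<Otimes>\<^sub>M E1) = UNIV"
  by (simp add: space_pair_measure)

lemma Z_null: "{p. fst p \<le> 0 \<or> snd p \<le> 0 \<or> fst p = snd p} \<in> null_sets (E1 \<Otimes>\<^sub>M E1)"
proof -
  interpret P1: prob_space E1 by (rule E1_prob)
  interpret PP: pair_sigma_finite E1 E1 ..
  let ?Z = "{p. fst p \<le> 0 \<or> snd p \<le> 0 \<or> fst p = snd p}"
  have meas: "?Z \<in> sets (E1 \<Otimes>\<^sub>M E1)"
  proof -
    have "?Z = {p \<in> space (borel \<Otimes>\<^sub>M borel). fst p \<le> (0::real) \<or> snd p \<le> (0::real) \<or> fst p = snd p}"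
      by (simp add: space_pair_measure)
    also have "\<dots> \<in> sets (borel \<Otimes>\<^sub>M borel)" by measurable
    finally show ?thesis by (simp add: sets_EE)
  qed
  have "AE y in E1. y \<notin> {..0} \<union> {}"
    by (rule AE_not_in) (rule E1_null_pts, simp)
  then have "AE y in E1. emeasure E1 ((\<lambda>x. (x, y)) -` ?Z) = 0"
  proof eventually_elim
    case (elim y)
    then have "(\<lambda>x. (x, y)) -` ?Z = {..0} \<union> {y}" by auto
    then show ?case using E1_null_pts[of "{y}"] by (simp add: null_setsD1)
  qed
  then have "(\<integral>\<^sup>+y. emeasure E1 ((\<lambda>x. (x, y)) -` ?Z) \<partial>E1) = 0"
    by (subst nn_integral_0_iff_AE) auto
  then show ?thesis
    using meas PP.emeasure_pair_measure_alt2[OF meas] by (simp add: null_sets_def)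
qed

lemma EE_swap:
  assumes "A \<in> sets (E1 \<Otimes>\<^sub>M E1)"
  shows "emeasure (E1 \<Otimes>\<^sub>M E1) A = emeasure (E1 \<Otimes>\<^sub>M E1) ((\<lambda>(x, y). (y, x)) -` A)"
proof -
  interpret P1: prob_space E1 by (rule E1_prob)
  interpret PP: pair_sigma_finite E1 E1 ..
  have "emeasure (E1 \<Otimes>\<^sub>M E1) A = emeasure (distr (E1 \<Otimes>\<^sub>M E1) (E1 \<Otimes>\<^sub>M E1) (\<lambda>(x, y). (y, x))) A"
    by (subst PP.distr_pair_swap[symmetric]) simp
  also have "\<dots> = emeasure (E1 \<Otimes>\<^sub>M E1) ((\<lambda>(x, y). (y, x)) -` A \<inter> space (E1 \<Otimes>\<^sub>M E1))"
    using assms by (intro emeasure_distr) (auto intro: measurable_pair_swap')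
  finally show ?thesis by (simp add: space_EE)
qed

lemma EE_meas: "P \<in> measurable (borel \<Otimes>\<^sub>M borel) (count_space UNIV) \<Longrightarrow> {p. P p} \<in> sets (E1 \<Otimes>\<^sub>M E1)"
proof -
  assume a: "P \<in> measurable (borel \<Otimes>\<^sub>M borel) (count_space UNIV)"
  have "P -` {True} \<inter> space (borel \<Otimes>\<^sub>M borel) \<in> sets (borel \<Otimes>\<^sub>M borel)"
    by (rule measurable_sets[OF a]) simp
  moreover have "P -` {True} \<inter> space (borel \<Otimes>\<^sub>M borel) = {p. P p}"
    by (auto simp: space_pair_measure)
  ultimately show ?thesis unfolding sets_EE by simp
qed

lemma EE_prob: "prob_space (E1 \<Otimes>\<^sub>M E1)"
proof -
  interpret P1: prob_space E1 by (rule E1_prob)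
  interpret PP: pair_prob_space E1 E1 ..
  show ?thesis by (rule PP.prob_space_axioms)
qed

lemma Gm:
  assumes "0 \<le> \<beta>" "0 \<le> \<gamma>" "0 \<le> \<alpha> + \<beta> * \<gamma>"
  shows "measure (E1 \<Otimes>\<^sub>M E1) {p. fst p > \<alpha> + \<beta> * snd p \<and> snd p > \<gamma>}
    = exp (- \<alpha>) * exp (- (1 + \<beta>) * \<gamma>) / (1 + \<beta>)"
  using G_lemma[OF assms] assms
  by (simp add: measure_def)

lemma good_restrict:
  assumes "A \<in> sets (E1 \<Otimes>\<^sub>M E1)"
  shows "measure (E1 \<Otimes>\<^sub>M E1) (A \<inter> {p. 0 < fst p \<and> 0 < snd p \<and> fst p \<noteq> snd p}) = measure (E1 \<Otimes>\<^sub>M E1) A"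
proof -
  have "A \<inter> {p. 0 < fst p \<and> 0 < snd p \<and> fst p \<noteq> snd p} = A - {p. fst p \<le> 0 \<or> snd p \<le> 0 \<or> fst p = snd p}"
    by auto
  then show ?thesis using measure_Diff_null_set[OF assms Z_null] by simp
qed

lemma good_restrict':
  assumes "P \<in> measurable (borel \<Otimes>\<^sub>M borel) (count_space UNIV)"
  shows "measure (E1 \<Otimes>\<^sub>M E1) {p. 0 < fst p \<and> 0 < snd p \<and> fst p \<noteq> snd p \<and> P p} = measure (E1 \<Otimes>\<^sub>M E1) {p. P p}"
proof -
  have "{p. 0 < fst p \<and> 0 < snd p \<and> fst p \<noteq> snd p \<and> P p} = {p. P p} \<inter> {p. 0 < fst p \<and> 0 < snd p \<and> fst p \<noteq> snd p}"
    by auto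
  then show ?thesis using good_restrict[OF EE_meas[OF assms]] by simp
qed

lemma swap_m:
  assumes "(\<lambda>p. P (fst p) (snd p)) \<in> measurable (borel \<Otimes>\<^sub>M borel) (count_space UNIV)"
  shows "measure (E1 \<Otimes>\<^sub>M E1) {p. P (snd p) (fst p)} = measure (E1 \<Otimes>\<^sub>M E1) {p. P (fst p) (snd p)}"
proof -
  have "(\<lambda>(x, y). (y, x)) -` {p. P (snd p) (fst p)} = {p. P (fst p) (snd p)}" by auto
  moreover have "{p. P (snd p) (fst p)} \<in> sets (E1 \<Otimes>\<^sub>M E1)"
    by (rule EE_meas) (use measurable_compose[OF measurable_pair_swap' assms] in \<open>simp add: split_beta\<close>)
  ultimately show ?thesis using EE_swap by (simp add: measure_def)
qed

lemma exp_comb: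
  fixes b c :: real
  assumes "b < 1"
  shows "exp (- c) * exp (- (1 + b) * (c / (1 - b))) = exp (- (2 * c / (1 - b)))"
proof -
  have "- c + - (1 + b) * (c / (1 - b)) = - (2 * c / (1 - b))"
    using assms by (simp add: field_simps)
  then show ?thesis by (simp add: exp_add[symmetric] del: exp_add)
qed

lemma L12:
  assumes c: "0 < c" and b: "0 < b"
  shows "measure (E1 \<Otimes>\<^sub>M E1) {p. 0 < fst p \<and> 0 < snd p \<and> fst p \<noteq> snd p \<and>
            max (fst p) (snd p) > c + b * min (fst p) (snd p)}
   = (if b < 1 then 2 / (1 + b) * exp (- c) - (1 - b) / (1 + b) * exp (- (2 * c / (1 - b)))
      else 2 / (1 + b) * exp (- c))"
proof -
  interpret P: prob_space "E1 \<Otimes>\<^sub>M E1" by (rule EE_prob)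
  let ?N = "E1 \<Otimes>\<^sub>M E1"
  define D1 where "D1 = {p. 0 < fst p \<and> 0 < snd p \<and> fst p \<noteq> snd p \<and> fst p > snd p \<and> fst p > c + b * snd p}"
  define D2 where "D2 = {p. 0 < snd p \<and> 0 < fst p \<and> snd p \<noteq> fst p \<and> snd p > fst p \<and> snd p > c + b * fst p}"
  have mD1: "D1 \<in> sets ?N" unfolding D1_def by (rule EE_meas) measurable
  have mD2: "D2 \<in> sets ?N" unfolding D2_def by (rule EE_meas) measurable
  have S: "{p. 0 < fst p \<and> 0 < snd p \<and> fst p \<noteq> snd p \<and>
            max (fst p) (snd p) > c + b * min (fst p) (snd p)} = D1 \<union> D2"
    unfolding D1_def D2_def by (auto simp: max_def min_def)
  have disj: "D1 \<inter> D2 = {}" unfolding D1_def D2_def by auto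
  have sym: "measure ?N D2 = measure ?N D1"
    unfolding D1_def D2_def
    by (rule swap_m[where P="\<lambda>x y. 0 < x \<and> 0 < y \<and> x \<noteq> y \<and> x > y \<and> x > c + b * y"]) measurable
  have Sm: "measure ?N (D1 \<union> D2) = 2 * measure ?N D1"
    using P.finite_measure_Union[OF mD1 mD2 disj] sym by simp
  show ?thesis
  proof (cases "b < 1")
    case False
    have hby: "\<And>y::real. 0 < y \<Longrightarrow> y \<le> b * y" using False
      by (simp add: mult_le_cancel_right1)
    have "D1 = {p. 0 < fst p \<and> 0 < snd p \<and> fst p \<noteq> snd p \<and> (fst p > c + b * snd p \<and> snd p > 0)}"
      unfolding D1_def
      apply (intro Collect_cong)
      subgoal for p using hby[of "snd p"] c by (smt (verit))
      done
    then have "measure ?N D1 = measure ?N {p. fst p > c + b * snd p \<and> snd p > 0}"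
      using good_restrict'[of "\<lambda>p. fst p > c + b * snd p \<and> snd p > 0"] by simp
    also have "\<dots> = exp (- c) / (1 + b)"
      using Gm[of b 0 c] b c by simp
    finally show ?thesis using S Sm False by simp
  next
    case True
    define m0 where "m0 = c / (1 - b)"
    have m0: "\<And>y. m0 < y \<longleftrightarrow> c < (1 - b) * y" using True unfolding m0_def
      by (simp add: pos_divide_less_eq mult.commute)
    have m0pos: "0 < m0" using True c unfolding m0_def by simp
    have m0': "\<And>y. m0 < y \<longleftrightarrow> c < y - b * y" using m0 by (simp add: left_diff_distrib)
    define X where "X = {p. 0 < fst p \<and> 0 < snd p \<and> fst p \<noteq> snd p \<and> snd p > fst p \<and> fst p > c + b * snd p}"
    define Y where "Y = {p. 0 < fst p \<and> 0 < snd p \<and> fst p \<noteq> snd p \<and> (fst p > 0 + 1 * snd p \<and> snd p > m0)}"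
    define T1 where "T1 = {p. 0 < fst p \<and> 0 < snd p \<and> fst p \<noteq> snd p \<and> (fst p > c + b * snd p \<and> snd p > 0)}"
    define T2 where "T2 = {p. 0 < fst p \<and> 0 < snd p \<and> fst p \<noteq> snd p \<and> (fst p > c + b * snd p \<and> snd p > m0)}"
    have mX: "X \<in> sets ?N" unfolding X_def by (rule EE_meas) measurable
    have mY: "Y \<in> sets ?N" unfolding Y_def by (rule EE_meas) measurable
    have T1: "T1 = D1 \<union> X" unfolding T1_def D1_def X_def by auto
    have T2: "T2 = X \<union> Y" unfolding T2_def X_def Y_def m0' by auto
    have mT1: "measure ?N T1 = exp (- c) / (1 + b)"
    proof -
      have "measure ?N T1 = measure ?N {p. fst p > c + b * snd p \<and> snd p > 0}"
        unfolding T1_def by (rule good_restrict') measurable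
      then show ?thesis using Gm[of b 0 c] b c by simp
    qed
    have mT2: "measure ?N T2 = exp (- (2 * c / (1 - b))) / (1 + b)"
    proof -
      have "measure ?N T2 = measure ?N {p. fst p > c + b * snd p \<and> snd p > m0}"
        unfolding T2_def by (rule good_restrict') measurable
      also have "\<dots> = exp (- c) * exp (- (1 + b) * m0) / (1 + b)"
        using Gm[of b m0 c] b c m0pos by simp
      finally show ?thesis using exp_comb[OF True, of c] unfolding m0_def by simp
    qed
    have mYv: "measure ?N Y = exp (- (2 * c / (1 - b))) / 2"
    proof -
      have "measure ?N Y = measure ?N {p. fst p > 0 + 1 * snd p \<and> snd p > m0}"
        unfolding Y_def by (rule good_restrict') measurable
      also have "\<dots> = exp (- 0) * exp (- (1 + 1) * m0) / (1 + 1)"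
        using Gm[of 1 m0 0] m0pos by simp
      finally show ?thesis unfolding m0_def by simp
    qed
    have e1: "measure ?N T1 = measure ?N D1 + measure ?N X"
      unfolding T1 by (rule P.finite_measure_Union[OF mD1 mX]) (auto simp: D1_def X_def)
    have e2: "measure ?N T2 = measure ?N X + measure ?N Y"
      unfolding T2 by (rule P.finite_measure_Union[OF mX mY]) (auto simp: Y_def X_def)
    have "measure ?N D1 = exp (- c) / (1 + b) - exp (- (2 * c / (1 - b))) / (1 + b) + exp (- (2 * c / (1 - b))) / 2"
      using e1 e2 mT1 mT2 mYv by linarith
    moreover have "(1 - b) / (1 + b) * exp (- (2 * c / (1 - b))) = 2 * (exp (- (2 * c / (1 - b))) / (1 + b)) - exp (- (2 * c / (1 - b)))"
      using b by (simp add: field_simps)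
    moreover have "2 / (1 + b) * exp (- c) = 2 * (exp (- c) / (1 + b))" by simp
    ultimately show ?thesis unfolding S Sm using True by simp
  qed
qed

lemma L22:
  assumes c: "0 < c" and b: "0 \<le> b"
  shows "measure (E1 \<Otimes>\<^sub>M E1) {p. 0 < fst p \<and> 0 < snd p \<and> fst p \<noteq> snd p \<and>
            min (fst p) (snd p) > c + b * max (fst p) (snd p)}
   = (if b < 1 then (1 - b) / (1 + b) * exp (- (2 * c / (1 - b))) else 0)"
proof -
  interpret P: prob_space "E1 \<Otimes>\<^sub>M E1" by (rule EE_prob)
  let ?N = "E1 \<Otimes>\<^sub>M E1"
  show ?thesis
  proof (cases "b < 1")
    case False
    have hby: "\<And>y::real. 0 < y \<Longrightarrow> y \<le> b * y" using False
      by (simp add: mult_le_cancel_right1)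
    have E: "{p. 0 < fst p \<and> 0 < snd p \<and> fst p \<noteq> snd p \<and>
            min (fst p) (snd p) > c + b * max (fst p) (snd p)} = {}"
      apply (intro set_eqI)
      subgoal for p unfolding max_def min_def mem_Collect_eq empty_iff using hby[of "snd p"] hby[of "fst p"] c
        by (smt (verit))
      done
    show ?thesis unfolding E using False by simp
  next
    case True
    define D1 where "D1 = {p. 0 < fst p \<and> 0 < snd p \<and> fst p \<noteq> snd p \<and> snd p > fst p \<and> fst p > c + b * snd p}"
    define D2 where "D2 = {p. 0 < snd p \<and> 0 < fst p \<and> snd p \<noteq> fst p \<and> fst p > snd p \<and> snd p > c + b * fst p}"
    have mD1: "D1 \<in> sets ?N" unfolding D1_def by (rule EE_meas) measurable
    have mD2: "D2 \<in> sets ?N" unfolding D2_def by (rule EE_meas) measurable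
    have S: "{p. 0 < fst p \<and> 0 < snd p \<and> fst p \<noteq> snd p \<and>
              min (fst p) (snd p) > c + b * max (fst p) (snd p)} = D1 \<union> D2"
      unfolding D1_def D2_def by (auto simp: max_def min_def)
    have disj: "D1 \<inter> D2 = {}" unfolding D1_def D2_def by auto
    have sym: "measure ?N D2 = measure ?N D1"
      unfolding D1_def D2_def
      by (rule swap_m[where P="\<lambda>x y. 0 < x \<and> 0 < y \<and> x \<noteq> y \<and> y > x \<and> x > c + b * y"]) measurable
    have Sm: "measure ?N (D1 \<union> D2) = 2 * measure ?N D1"
      using P.finite_measure_Union[OF mD1 mD2 disj] sym by simp
    define m0 where "m0 = c / (1 - b)"
    have m0: "\<And>y. m0 < y \<longleftrightarrow> c < (1 - b) * y" using True unfolding m0_def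
      by (simp add: pos_divide_less_eq mult.commute)
    have m0pos: "0 < m0" using True c unfolding m0_def by simp
    have m0': "\<And>y. m0 < y \<longleftrightarrow> c < y - b * y" using m0 by (simp add: left_diff_distrib)
    define Y where "Y = {p. 0 < fst p \<and> 0 < snd p \<and> fst p \<noteq> snd p \<and> (fst p > 0 + 1 * snd p \<and> snd p > m0)}"
    define T2 where "T2 = {p. 0 < fst p \<and> 0 < snd p \<and> fst p \<noteq> snd p \<and> (fst p > c + b * snd p \<and> snd p > m0)}"
    have mY: "Y \<in> sets ?N" unfolding Y_def by (rule EE_meas) measurable
    have T2: "T2 = D1 \<union> Y" unfolding T2_def D1_def Y_def m0' by auto
    have mT2: "measure ?N T2 = exp (- (2 * c / (1 - b))) / (1 + b)"
    proof -
      have "measure ?N T2 = measure ?N {p. fst p > c + b * snd p \<and> snd p > m0}"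
        unfolding T2_def by (rule good_restrict') measurable
      also have "\<dots> = exp (- c) * exp (- (1 + b) * m0) / (1 + b)"
        using Gm[of b m0 c] b c m0pos by simp
      finally show ?thesis using exp_comb[OF True, of c] unfolding m0_def by simp
    qed
    have mYv: "measure ?N Y = exp (- (2 * c / (1 - b))) / 2"
    proof -
      have "measure ?N Y = measure ?N {p. fst p > 0 + 1 * snd p \<and> snd p > m0}"
        unfolding Y_def by (rule good_restrict') measurable
      also have "\<dots> = exp (- 0) * exp (- (1 + 1) * m0) / (1 + 1)"
        using Gm[of 1 m0 0] m0pos by simp
      finally show ?thesis unfolding m0_def by simp
    qed
    have e2: "measure ?N T2 = measure ?N D1 + measure ?N Y"
      unfolding T2 by (rule P.finite_measure_Union[OF mD1 mY]) (auto simp: Y_def D1_def)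
    have "measure ?N D1 = exp (- (2 * c / (1 - b))) / (1 + b) - exp (- (2 * c / (1 - b))) / 2"
      using e2 mT2 mYv by linarith
    moreover have "(1 - b) / (1 + b) * exp (- (2 * c / (1 - b))) = 2 * (exp (- (2 * c / (1 - b))) / (1 + b)) - exp (- (2 * c / (1 - b)))"
      using b by (simp add: field_simps)
    ultimately show ?thesis unfolding S Sm using True by simp
  qed
qed

lemma (in prob_space) indep_slice:
  assumes ind: "indep_var S Y T Z" and A: "A \<in> sets (S \<Otimes>\<^sub>M T)"
  shows "emeasure M {x \<in> space M. (Y x, Z x) \<in> A} =
    (\<integral>\<^sup>+y. emeasure (distr M T Z) (Pair y -` A) \<partial>(distr M S Y))"
proof -
  have rv: "random_variable S Y" "random_variable T Z"
    using ind by (blast dest: indep_var_rv1 indep_var_rv2)+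
  have eq: "distr M S Y \<Otimes>\<^sub>M distr M T Z = distr M (S \<Otimes>\<^sub>M T) (\<lambda>x. (Y x, Z x))"
    using ind indep_var_distribution_eq by blast
  interpret T: prob_space "distr M T Z" by (rule prob_space_distr) (rule rv(2))
  have "emeasure M {x \<in> space M. (Y x, Z x) \<in> A} = emeasure (distr M (S \<Otimes>\<^sub>M T) (\<lambda>x. (Y x, Z x))) A"
    using rv A by (subst emeasure_distr) (auto intro: measurable_Pair intro!: arg_cong[where f="emeasure M"])
  also have "\<dots> = emeasure (distr M S Y \<Otimes>\<^sub>M distr M T Z) A" unfolding eq ..
  also have "\<dots> = (\<integral>\<^sup>+y. emeasure (distr M T Z) (Pair y -` A) \<partial>(distr M S Y))"
    using A by (intro T.emeasure_pair_measure_alt) (simp cong: sets_pair_measure_cong)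
  finally show ?thesis .
qed

lemma (in prob_space) indep_pick:
  assumes ind: "indep_vars (\<lambda>_. borel) X I" and AB: "A \<inter> B = {}" "A \<subseteq> I" "B \<subseteq> I"
    and f: "f \<in> measurable (PiM A (\<lambda>_. borel)) N1" and g: "g \<in> measurable (PiM B (\<lambda>_. borel)) N2"
  shows "indep_var N1 (\<lambda>\<omega>. f (restrict (\<lambda>i. X i \<omega>) A)) N2 (\<lambda>\<omega>. g (restrict (\<lambda>i. X i \<omega>) B))"
  using indep_var_compose[OF indep_var_restrict[OF ind AB] f g] by (simp add: comp_def)

lemma E1_distr:
  assumes "distributed M lborel h (exponential_density 1)"
  shows "distr M borel h = E1"
proof -
  have "distr M borel h = distr M lborel h" by (rule distr_cong) auto
  also have "\<dots> = E1" using distributed_distr_eq_density[OF assms] .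
  finally show ?thesis .
qed

lemma (in prob_space) outer:
  assumes Im: "I \<in> borel_measurable M" and Ipos: "AE x in M. 0 < I x" and Inn: "\<forall>x\<in>space M. 0 \<le> I x"
    and L: "\<forall>s\<ge>0. integral\<^sup>L M (\<lambda>x. exp (- s * I x)) = L s"
    and s: "0 \<le> s1" "0 \<le> s2"
    and Ym: "Y \<in> measurable M K" and \<phi>m: "\<phi> \<in> borel_measurable K" and \<phi>Y: "\<And>x. x \<in> space M \<Longrightarrow> \<phi> (Y x) = I x"
    and Q: "\<And>y. 0 < \<phi> y \<Longrightarrow> Q y = ennreal (A * exp (- s1 * \<phi> y) - B * exp (- s2 * \<phi> y))"
    and nn: "\<And>i. 0 < i \<Longrightarrow> 0 \<le> A * exp (- s1 * i) - B * exp (- s2 * i)"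
    and E: "emeasure M S = (\<integral>\<^sup>+y. Q y \<partial>(distr M K Y))"
  shows "measure M S = A * L s1 - B * L s2"
proof -
  define g where "g i = A * exp (- s1 * i) - B * exp (- s2 * i)" for i
  have gm: "(\<lambda>y. g (\<phi> y)) \<in> borel_measurable K" unfolding g_def using \<phi>m by measurable
  have AEd: "AE y in distr M K Y. 0 < \<phi> y"
  proof (subst AE_distr_iff[OF Ym])
    show "{x \<in> space K. 0 < \<phi> x} \<in> sets K" using \<phi>m by measurable
    show "AE x in M. 0 < \<phi> (Y x)" using Ipos by (auto simp: \<phi>Y)
  qed
  have "(\<integral>\<^sup>+y. Q y \<partial>(distr M K Y)) = (\<integral>\<^sup>+y. ennreal (g (\<phi> y)) \<partial>(distr M K Y))"
    using AEd by (intro nn_integral_cong_AE) (auto elim!: eventually_mono simp: Q g_def)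
  also have "\<dots> = (\<integral>\<^sup>+x. ennreal (g (\<phi> (Y x))) \<partial>M)"
    using Ym gm by (subst nn_integral_distr) auto
  also have "\<dots> = (\<integral>\<^sup>+x. ennreal (g (I x)) \<partial>M)"
    by (intro nn_integral_cong) (simp add: \<phi>Y)
  also have int: "integrable M (\<lambda>x. g (I x))"
  proof -
    have ie: "integrable M (\<lambda>x. exp (- s * I x))" if "0 \<le> s" for s
    proof (rule integrable_const_bound[where B=1])
      show "AE x in M. norm (exp (- s * I x)) \<le> 1"
        using Inn that by (auto intro!: AE_I2 simp: mult_nonneg_nonneg)
    qed (use Im in measurable)
    show ?thesis unfolding g_def using ie[OF s(1)] ie[OF s(2)] by auto
  qed
  have nnM: "AE x in M. 0 \<le> g (I x)"
    using Ipos
  proof eventually_elim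
    case (elim x) show ?case unfolding g_def by (rule nn[OF elim])
  qed
  have "(\<integral>\<^sup>+x. ennreal (g (I x)) \<partial>M) = ennreal (\<integral>x. g (I x) \<partial>M)"
    by (rule nn_integral_eq_integral[OF int nnM])
  also have "(\<integral>x. g (I x) \<partial>M) = A * L s1 - B * L s2"
  proof -
    have ie: "integrable M (\<lambda>x. exp (- s * I x))" if "0 \<le> s" for s
    proof (rule integrable_const_bound[where B=1])
      show "AE x in M. norm (exp (- s * I x)) \<le> 1"
        using Inn that by (auto intro!: AE_I2 simp: mult_nonneg_nonneg)
    qed (use Im in measurable)
    have "(\<integral>x. g (I x) \<partial>M) = A * (\<integral>x. exp (- s1 * I x) \<partial>M) - B * (\<integral>x. exp (- s2 * I x) \<partial>M)"
      unfolding g_def using ie[OF s(1)] ie[OF s(2)] by simp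
    then show ?thesis using L s by simp
  qed
  finally have "emeasure M S = ennreal (A * L s1 - B * L s2)" using E by simp
  moreover have "0 \<le> A * L s1 - B * L s2"
    using \<open>(\<integral>x. g (I x) \<partial>M) = A * L s1 - B * L s2\<close> integral_nonneg_AE[OF nnM] by simp
  ultimately show ?thesis by (simp add: measure_def)
qed

lemma LI_small:
  assumes "\<alpha> > 2" "\<phi>1 > 0" "0 < p"
  shows "\<exists>s\<ge>0. LI \<alpha> \<phi>1 s < p"
proof -
  define K where "K = \<phi>1 * Gamma (1 + 2 / \<alpha>) * Gamma (1 - 2 / \<alpha>)"
  have h: "0 < 2 / \<alpha>" "2 / \<alpha> < 1" using assms by (auto simp: field_simps)
  have h3: "0 < 1 + 2 / \<alpha>" "0 < 1 - 2 / \<alpha>" using h by linarith+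
  have K: "0 < K" unfolding K_def using assms h3 by (intro mult_pos_pos Gamma_real_pos) auto
  define t where "t = \<bar>ln p\<bar> / K + 1"
  have t: "0 < t" unfolding t_def using K by (simp add: add_nonneg_pos)
  define s where "s = t powr (\<alpha> / 2)"
  have "s powr (2 / \<alpha>) = t" unfolding s_def using t assms by (simp add: powr_powr)
  then have "LI \<alpha> \<phi>1 s = exp (- (K * t))" unfolding LI_def K_def by simp
  also have "K * t = \<bar>ln p\<bar> + K" unfolding t_def using K by (simp add: field_simps)
  also have "exp (- (\<bar>ln p\<bar> + K)) < exp (ln p)"
    using K by simp
  also have "exp (ln p) = p" using assms by simp
  finally show ?thesis unfolding s_def by (intro exI[of _ "t powr (\<alpha> / 2)"]) auto
qed

lemma (in prob_space) I_pos:
  assumes Im: "I \<in> borel_measurable M" and Inn: "\<forall>x\<in>space M. 0 \<le> I x"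
    and L: "\<forall>s\<ge>0. integral\<^sup>L M (\<lambda>x. exp (- s * I x)) = LI \<alpha> \<phi>1 s"
    and a: "\<alpha> > 2" "\<phi>1 > 0"
  shows "AE x in M. 0 < I x"
proof -
  let ?Z = "{x \<in> space M. \<not> 0 < I x}"
  have Zm: "?Z \<in> sets M" using Im by measurable
  have le: "prob ?Z \<le> LI \<alpha> \<phi>1 s" if "0 \<le> s" for s
  proof -
    have ie: "integrable M (\<lambda>x. exp (- s * I x))"
    proof (rule integrable_const_bound[where B=1])
      show "AE x in M. norm (exp (- s * I x)) \<le> 1"
        using Inn that by (auto intro!: AE_I2 simp: mult_nonneg_nonneg)
    qed (use Im in measurable)
    have "prob ?Z = (\<integral>x. indicator ?Z x \<partial>M)" using Zm by simp
    also have "\<dots> \<le> (\<integral>x. exp (- s * I x) \<partial>M)"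
    proof (rule integral_mono[OF _ ie])
      show "integrable M (indicator ?Z :: 'a \<Rightarrow> real)"
        using Zm by (intro integrable_real_indicator) (auto simp: less_top[symmetric])
    qed (use Inn in \<open>auto simp: indicator_def\<close>)
    finally show ?thesis using L that by simp
  qed
  have "prob ?Z = 0"
  proof (rule ccontr)
    assume "prob ?Z \<noteq> 0"
    then have "0 < prob ?Z" using measure_nonneg[of M ?Z] by linarith
    then obtain s where "0 \<le> s" "LI \<alpha> \<phi>1 s < prob ?Z" using LI_small[OF a] by blast
    then show False using le by fastforce
  qed
  then have "emeasure M ?Z = 0" by (simp add: emeasure_eq_measure)
  then show ?thesis using Zm by (subst AE_iff_measurable[OF _ refl]) auto
qed

lemma ar_div:
  fixes \<theta> a X den :: real
  assumes "0 < den" "0 < a"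
  shows "(\<theta> < a * X / den) \<longleftrightarrow> (\<theta> * den / a < X)"
  using assms by (simp add: pos_less_divide_eq pos_divide_less_eq mult.commute)

lemma slice12:
  assumes i: "0 < i" and a: "0 < a1" "0 < a2" and th: "0 < \<theta>"
  shows "measure (E1 \<Otimes>\<^sub>M E1) {p. \<theta> < a1 * max (fst p) (snd p) / (i + a2 * min (fst p) (snd p))} =
    (if \<theta> * a2 / a1 < 1
     then 2 * a1 / (a1 + \<theta> * a2) * exp (- (\<theta> / a1) * i)
        - (a1 - \<theta> * a2) / (a1 + \<theta> * a2) * exp (- (2 * \<theta> / (a1 - \<theta> * a2)) * i)
     else 2 * a1 / (a1 + \<theta> * a2) * exp (- (\<theta> / a1) * i))"
proof -
  let ?N = "E1 \<Otimes>\<^sub>M E1"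
  let ?Sl = "{p. \<theta> < a1 * max (fst p) (snd p) / (i + a2 * min (fst p) (snd p))}"
  define b where "b = \<theta> * a2 / a1"
  define c where "c = \<theta> * i / a1"
  have b: "0 < b" and c: "0 < c" unfolding b_def c_def using a th i by auto
  have Slm: "?Sl \<in> sets ?N" by (rule EE_meas) measurable
  have "measure ?N ?Sl = measure ?N (?Sl \<inter> {p. 0 < fst p \<and> 0 < snd p \<and> fst p \<noteq> snd p})"
    using good_restrict[OF Slm] by simp
  also have "?Sl \<inter> {p. 0 < fst p \<and> 0 < snd p \<and> fst p \<noteq> snd p} =
    {p. 0 < fst p \<and> 0 < snd p \<and> fst p \<noteq> snd p \<and> max (fst p) (snd p) > c + b * min (fst p) (snd p)}"
  proof (intro set_eqI iffI)
    fix p :: "real \<times> real"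
    {
      assume g: "0 < fst p" "0 < snd p"
      have den: "0 < i + a2 * min (fst p) (snd p)" using g i a by (simp add: add_pos_pos)
      have "\<theta> * (i + a2 * min (fst p) (snd p)) / a1 = c + b * min (fst p) (snd p)"
        unfolding b_def c_def using a by (simp add: field_simps)
      then have "(\<theta> < a1 * max (fst p) (snd p) / (i + a2 * min (fst p) (snd p))) \<longleftrightarrow> c + b * min (fst p) (snd p) < max (fst p) (snd p)"
        using ar_div[OF den a(1)] by simp
    }
    then show "p \<in> ?Sl \<inter> {p. 0 < fst p \<and> 0 < snd p \<and> fst p \<noteq> snd p} \<Longrightarrow>
      p \<in> {p. 0 < fst p \<and> 0 < snd p \<and> fst p \<noteq> snd p \<and> max (fst p) (snd p) > c + b * min (fst p) (snd p)}"
    and "p \<in> {p. 0 < fst p \<and> 0 < snd p \<and> fst p \<noteq> snd p \<and> max (fst p) (snd p) > c + b * min (fst p) (snd p)} \<Longrightarrow>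
      p \<in> ?Sl \<inter> {p. 0 < fst p \<and> 0 < snd p \<and> fst p \<noteq> snd p}"
      by auto
  qed
  also have "measure ?N \<dots> = (if b < 1 then 2 / (1 + b) * exp (- c) - (1 - b) / (1 + b) * exp (- (2 * c / (1 - b)))
      else 2 / (1 + b) * exp (- c))"
    by (rule L12[OF c b])
  also have "\<dots> = (if \<theta> * a2 / a1 < 1
     then 2 * a1 / (a1 + \<theta> * a2) * exp (- (\<theta> / a1) * i)
        - (a1 - \<theta> * a2) / (a1 + \<theta> * a2) * exp (- (2 * \<theta> / (a1 - \<theta> * a2)) * i)
     else 2 * a1 / (a1 + \<theta> * a2) * exp (- (\<theta> / a1) * i))"
  proof -
    have e1: "2 / (1 + b) = 2 * a1 / (a1 + \<theta> * a2)" unfolding b_def using a th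
      by (simp add: field_simps)
    have e2: "(1 - b) / (1 + b) = (a1 - \<theta> * a2) / (a1 + \<theta> * a2)"
    proof -
      have "(1 - b) / (1 + b) = (a1 * (1 - b)) / (a1 * (1 + b))" using a by simp
      also have "a1 * (1 - b) = a1 - \<theta> * a2" unfolding b_def using a by (simp add: field_simps)
      also have "a1 * (1 + b) = a1 + \<theta> * a2" unfolding b_def using a by (simp add: field_simps)
      finally show ?thesis .
    qed
    have e3: "c = \<theta> / a1 * i" unfolding c_def by simp
    have e4: "2 * c / (1 - b) = 2 * \<theta> / (a1 - \<theta> * a2) * i" if "b < 1"
    proof -
      have "a1 - \<theta> * a2 \<noteq> 0" using that a unfolding b_def by (simp add: field_simps)
      then show ?thesis unfolding b_def c_def using a by (simp add: field_simps)
    qed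
    show ?thesis using e1 e2 e3 e4 unfolding b_def[symmetric] by simp
  qed
  finally show ?thesis .
qed

lemma slice22:
  assumes i: "0 < i" and a: "0 < a1" "0 < a2" and th: "0 < \<theta>" and mu: "0 \<le> \<mu>"
  shows "measure (E1 \<Otimes>\<^sub>M E1) {p. \<theta> < a2 * min (fst p) (snd p) / (i + \<mu> * a1 * max (fst p) (snd p))} =
    (if \<theta> * \<mu> * a1 / a2 < 1
     then (a2 - \<theta> * \<mu> * a1) / (a2 + \<theta> * \<mu> * a1) * exp (- (2 * \<theta> / (a2 - \<theta> * \<mu> * a1)) * i)
     else 0)"
proof -
  let ?N = "E1 \<Otimes>\<^sub>M E1"
  let ?Sl = "{p. \<theta> < a2 * min (fst p) (snd p) / (i + \<mu> * a1 * max (fst p) (snd p))}"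
  define b where "b = \<theta> * \<mu> * a1 / a2"
  define c where "c = \<theta> * i / a2"
  have b: "0 \<le> b" and c: "0 < c" unfolding b_def c_def using a th i mu by auto
  have Slm: "?Sl \<in> sets ?N" by (rule EE_meas) measurable
  have "measure ?N ?Sl = measure ?N (?Sl \<inter> {p. 0 < fst p \<and> 0 < snd p \<and> fst p \<noteq> snd p})"
    using good_restrict[OF Slm] by simp
  also have "?Sl \<inter> {p. 0 < fst p \<and> 0 < snd p \<and> fst p \<noteq> snd p} =
    {p. 0 < fst p \<and> 0 < snd p \<and> fst p \<noteq> snd p \<and> min (fst p) (snd p) > c + b * max (fst p) (snd p)}"
  proof (intro set_eqI iffI)
    fix p :: "real \<times> real"
    {
      assume g: "0 < fst p" "0 < snd p"
      have "0 \<le> \<mu> * a1 * max (fst p) (snd p)" using g mu a by simp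
      then have den: "0 < i + \<mu> * a1 * max (fst p) (snd p)" using i by linarith
      have "\<theta> * (i + \<mu> * a1 * max (fst p) (snd p)) / a2 = c + b * max (fst p) (snd p)"
        unfolding b_def c_def using a by (simp add: field_simps)
      then have "(\<theta> < a2 * min (fst p) (snd p) / (i + \<mu> * a1 * max (fst p) (snd p))) \<longleftrightarrow> c + b * max (fst p) (snd p) < min (fst p) (snd p)"
        using ar_div[OF den a(2)] by simp
    }
    then show "p \<in> ?Sl \<inter> {p. 0 < fst p \<and> 0 < snd p \<and> fst p \<noteq> snd p} \<Longrightarrow>
      p \<in> {p. 0 < fst p \<and> 0 < snd p \<and> fst p \<noteq> snd p \<and> min (fst p) (snd p) > c + b * max (fst p) (snd p)}"
    and "p \<in> {p. 0 < fst p \<and> 0 < snd p \<and> fst p \<noteq> snd p \<and> min (fst p) (snd p) > c + b * max (fst p) (snd p)} \<Longrightarrow>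
      p \<in> ?Sl \<inter> {p. 0 < fst p \<and> 0 < snd p \<and> fst p \<noteq> snd p}"
      by auto
  qed
  also have "measure ?N \<dots> = (if b < 1 then (1 - b) / (1 + b) * exp (- (2 * c / (1 - b))) else 0)"
    by (rule L22[OF c b])
  also have "\<dots> = (if \<theta> * \<mu> * a1 / a2 < 1
     then (a2 - \<theta> * \<mu> * a1) / (a2 + \<theta> * \<mu> * a1) * exp (- (2 * \<theta> / (a2 - \<theta> * \<mu> * a1)) * i)
     else 0)"
  proof -
    have e2: "(1 - b) / (1 + b) = (a2 - \<theta> * \<mu> * a1) / (a2 + \<theta> * \<mu> * a1)"
    proof -
      have "(1 - b) / (1 + b) = (a2 * (1 - b)) / (a2 * (1 + b))" using a by simp
      also have "a2 * (1 - b) = a2 - \<theta> * \<mu> * a1" unfolding b_def using a by (simp add: field_simps)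
      also have "a2 * (1 + b) = a2 + \<theta> * \<mu> * a1" unfolding b_def using a by (simp add: field_simps)
      finally show ?thesis .
    qed
    have e4: "2 * c / (1 - b) = 2 * \<theta> / (a2 - \<theta> * \<mu> * a1) * i" if "b < 1"
    proof -
      have "a2 - \<theta> * \<mu> * a1 \<noteq> 0" using that a unfolding b_def by (simp add: field_simps)
      then show ?thesis unfolding b_def c_def using a by (simp add: field_simps)
    qed
    show ?thesis using e2 e4 unfolding b_def[symmetric] by simp
  qed
  finally show ?thesis .
qed

lemma pred_sets: "P \<in> measurable N (count_space UNIV) \<Longrightarrow> space N = UNIV \<Longrightarrow> {p. P p} \<in> sets N"
proof -
  assume a: "P \<in> measurable N (count_space UNIV)" "space N = UNIV"
  have "P -` {True} \<inter> space N \<in> sets N"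
    by (rule measurable_sets[OF a(1)]) simp
  moreover have "P -` {True} \<inter> space N = {p. P p}" using a(2) by auto
  ultimately show ?thesis by simp
qed

theorem theorem1:
  fixes M :: "'a measure" and h h1 h2 I :: "'a \<Rightarrow> real"
    and \<alpha> \<phi>1 \<theta> \<mu> a1 a2 :: real
  assumes "prob_space M"
    and "\<alpha> > 2" and "\<phi>1 > 0" and "\<theta> > 0" and "0 \<le> \<mu>" and "\<mu> \<le> 1"
    and "a1 > 0" and "a2 > 0"
    and "distributed M lborel h (exponential_density 1)"
    and "distributed M lborel h1 (exponential_density 1)"
    and "distributed M lborel h2 (exponential_density 1)"
    and "I \<in> borel_measurable M"
    and "\<forall>x\<in>space M. I x \<ge> 0"
    and "prob_space.indep_vars M (\<lambda>_. borel) (\<lambda>i. [h, h1, h2, I] ! i) {0..<4}"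
    and "\<forall>s\<ge>0. integral\<^sup>L M (\<lambda>x. exp (- s * I x)) = LI \<alpha> \<phi>1 s"
  shows "measure M {x \<in> space M. h x / I x > \<theta>} = LI \<alpha> \<phi>1 \<theta>
    \<and> measure M {x \<in> space M.
            a1 * max (h1 x) (h2 x) / (I x + a2 * min (h1 x) (h2 x)) > \<theta>} =
         (if \<theta> * a2 / a1 < 1
          then 2 * a1 / (a1 + \<theta> * a2) * LI \<alpha> \<phi>1 (\<theta> / a1)
               - (a1 - \<theta> * a2) / (a1 + \<theta> * a2) * LI \<alpha> \<phi>1 (2 * \<theta> / (a1 - \<theta> * a2))
          else 2 * a1 / (a1 + \<theta> * a2) * LI \<alpha> \<phi>1 (\<theta> / a1))
    \<and> measure M {x \<in> space M.
            a2 * min (h1 x) (h2 x) / (I x + \<mu> * a1 * max (h1 x) (h2 x)) > \<theta>} =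
         (if \<theta> * \<mu> * a1 / a2 < 1
          then (a2 - \<theta> * \<mu> * a1) / (a2 + \<theta> * \<mu> * a1)
               * LI \<alpha> \<phi>1 (2 * \<theta> / (a2 - \<theta> * \<mu> * a1))
          else 0)"
proof -
  interpret prob_space M by (rule assms(1))
  note ind = assms(14)
  have Ipos: "AE x in M. 0 < I x" by (rule I_pos[OF assms(12,13,15,2,3)])
  have ind_Ih: "indep_var borel I borel h"
    using indep_pick[OF ind, of "{3}" "{0}" "\<lambda>f. f 3" borel "\<lambda>f. f 0" borel,
        OF _ _ _ measurable_component_singleton measurable_component_singleton] by simp
  have ind_I12: "indep_var (borel \<Otimes>\<^sub>M borel) (\<lambda>x. (I x, 0::real)) (borel \<Otimes>\<^sub>M borel) (\<lambda>x. (h1 x, h2 x))"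
    using indep_pick[OF ind, of "{3}" "{1,2}" "\<lambda>f. (f 3, 0)" "borel \<Otimes>\<^sub>M borel" "\<lambda>f. (f 1, f 2)" "borel \<Otimes>\<^sub>M borel",
        OF _ _ _ measurable_Pair[OF measurable_component_singleton measurable_const] measurable_Pair[OF measurable_component_singleton measurable_component_singleton]]
    by simp
  have ind_12: "indep_var borel h1 borel h2"
    using indep_pick[OF ind, of "{1}" "{2}" "\<lambda>f. f 1" borel "\<lambda>f. f 2" borel,
        OF _ _ _ measurable_component_singleton measurable_component_singleton] by simp
  have dh: "distr M borel h = E1" by (rule E1_distr[OF assms(9)])
  have dh1: "distr M borel h1 = E1" by (rule E1_distr[OF assms(10)])
  have dh2: "distr M borel h2 = E1" by (rule E1_distr[OF assms(11)])
  have d12: "distr M (borel \<Otimes>\<^sub>M borel) (\<lambda>x. (h1 x, h2 x)) = E1 \<Otimes>\<^sub>M E1"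
    using ind_12 indep_var_distribution_eq[of borel h1 borel h2] dh1 dh2 by simp
  interpret EE: prob_space "E1 \<Otimes>\<^sub>M E1" by (rule EE_prob)
  note th = assms(4) and a = assms(7,8) and mu = assms(5)
  have p1: "measure M {x \<in> space M. h x / I x > \<theta>} = LI \<alpha> \<phi>1 \<theta>"
  proof -
    let ?A = "{q :: real \<times> real. \<theta> < snd q / fst q}"
    have Am: "?A \<in> sets (borel \<Otimes>\<^sub>M borel)"
      by (rule pred_sets) (measurable, simp add: space_pair_measure)
    have "emeasure M {x \<in> space M. h x / I x > \<theta>} = emeasure M {x \<in> space M. (I x, h x) \<in> ?A}"
      by simp
    also have "\<dots> = (\<integral>\<^sup>+i. emeasure E1 (Pair i -` ?A) \<partial>(distr M borel I))"
      using indep_slice[OF ind_Ih Am] dh by simp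
    finally have E: "emeasure M {x \<in> space M. h x / I x > \<theta>} = (\<integral>\<^sup>+i. emeasure E1 (Pair i -` ?A) \<partial>(distr M borel I))" .
    have Q: "emeasure E1 (Pair i -` ?A) = ennreal (1 * exp (- \<theta> * i) - 0 * exp (- 0 * i))" if "0 < i" for i
    proof -
      have "Pair i -` ?A = {\<theta> * i<..}" using that by (auto simp: pos_less_divide_eq)
      then show ?thesis using exp_tail[of 1 "\<theta> * i"] that th by simp
    qed
    have "measure M {x \<in> space M. h x / I x > \<theta>} = 1 * LI \<alpha> \<phi>1 \<theta> - 0 * LI \<alpha> \<phi>1 0"
      by (rule outer[OF assms(12) Ipos assms(13,15) _ _ _ _ _ _ _ E, where \<phi>="\<lambda>i. i"]) (use th Q assms(12) in auto)
    then show ?thesis by simp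
  qed
  have Ym2: "(\<lambda>x. (I x, 0::real)) \<in> measurable M (borel \<Otimes>\<^sub>M borel)"
    using assms(12) by measurable
  have \<phi>Y2: "\<And>x. x \<in> space M \<Longrightarrow> fst (I x, 0::real) = I x" by simp
  let ?A2 = "{q :: (real \<times> real) \<times> real \<times> real. \<theta> < a1 * max (fst (snd q)) (snd (snd q)) / (fst (fst q) + a2 * min (fst (snd q)) (snd (snd q)))}"
  have A2m: "?A2 \<in> sets ((borel \<Otimes>\<^sub>M borel) \<Otimes>\<^sub>M (borel \<Otimes>\<^sub>M borel))"
    by (rule pred_sets) (measurable, simp add: space_pair_measure)
  have E2: "emeasure M {x \<in> space M. a1 * max (h1 x) (h2 x) / (I x + a2 * min (h1 x) (h2 x)) > \<theta>} =
    (\<integral>\<^sup>+i. emeasure (E1 \<Otimes>\<^sub>M E1) (Pair i -` ?A2) \<partial>(distr M (borel \<Otimes>\<^sub>M borel) (\<lambda>x. (I x, 0::real))))"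
  proof -
    have "emeasure M {x \<in> space M. a1 * max (h1 x) (h2 x) / (I x + a2 * min (h1 x) (h2 x)) > \<theta>}
      = emeasure M {x \<in> space M. ((I x, 0), (h1 x, h2 x)) \<in> ?A2}" by simp
    also have "\<dots> = (\<integral>\<^sup>+i. emeasure (E1 \<Otimes>\<^sub>M E1) (Pair i -` ?A2) \<partial>(distr M (borel \<Otimes>\<^sub>M borel) (\<lambda>x. (I x, 0::real))))"
      using indep_slice[OF ind_I12 A2m] d12 by simp
    finally show ?thesis .
  qed
  have sl2: "Pair y -` ?A2 = {p. \<theta> < a1 * max (fst p) (snd p) / (fst y + a2 * min (fst p) (snd p))}" for y
    by auto
  have p2: "measure M {x \<in> space M.
            a1 * max (h1 x) (h2 x) / (I x + a2 * min (h1 x) (h2 x)) > \<theta>} =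
         (if \<theta> * a2 / a1 < 1
          then 2 * a1 / (a1 + \<theta> * a2) * LI \<alpha> \<phi>1 (\<theta> / a1)
               - (a1 - \<theta> * a2) / (a1 + \<theta> * a2) * LI \<alpha> \<phi>1 (2 * \<theta> / (a1 - \<theta> * a2))
          else 2 * a1 / (a1 + \<theta> * a2) * LI \<alpha> \<phi>1 (\<theta> / a1))"
  proof (cases "\<theta> * a2 / a1 < 1")
    case True
    have pos: "0 < a1 - \<theta> * a2" using True a by (simp add: field_simps)
    have Q: "emeasure (E1 \<Otimes>\<^sub>M E1) (Pair y -` ?A2) = ennreal (2 * a1 / (a1 + \<theta> * a2) * exp (- (\<theta> / a1) * fst y)
        - (a1 - \<theta> * a2) / (a1 + \<theta> * a2) * exp (- (2 * \<theta> / (a1 - \<theta> * a2)) * fst y))" if "0 < fst y" for y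
      unfolding sl2 EE.emeasure_eq_measure slice12[OF that a th] using True by simp
    have nn: "0 \<le> 2 * a1 / (a1 + \<theta> * a2) * exp (- (\<theta> / a1) * i)
        - (a1 - \<theta> * a2) / (a1 + \<theta> * a2) * exp (- (2 * \<theta> / (a1 - \<theta> * a2)) * i)" if "0 < i" for i
      using slice12[OF that a th] True measure_nonneg[of "E1 \<Otimes>\<^sub>M E1" "{p. \<theta> < a1 * max (fst p) (snd p) / (i + a2 * min (fst p) (snd p))}"]
      by simp
    show ?thesis
      using outer[OF assms(12) Ipos assms(13,15) _ _ Ym2 measurable_fst \<phi>Y2 Q nn E2] th a pos True by simp
  next
    case False
    have Q: "emeasure (E1 \<Otimes>\<^sub>M E1) (Pair y -` ?A2) = ennreal (2 * a1 / (a1 + \<theta> * a2) * exp (- (\<theta> / a1) * fst y)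
        - 0 * exp (- 0 * fst y))" if "0 < fst y" for y
      unfolding sl2 EE.emeasure_eq_measure slice12[OF that a th] using False by simp
    have nn: "0 \<le> 2 * a1 / (a1 + \<theta> * a2) * exp (- (\<theta> / a1) * i) - 0 * exp (- 0 * i)" if "0 < i" for i
      using a th by simp
    show ?thesis
      using outer[OF assms(12) Ipos assms(13,15) _ _ Ym2 measurable_fst \<phi>Y2 Q nn E2] th a False by simp
  qed
  let ?A3 = "{q :: (real \<times> real) \<times> real \<times> real. \<theta> < a2 * min (fst (snd q)) (snd (snd q)) / (fst (fst q) + \<mu> * a1 * max (fst (snd q)) (snd (snd q)))}"
  have A3m: "?A3 \<in> sets ((borel \<Otimes>\<^sub>M borel) \<Otimes>\<^sub>M (borel \<Otimes>\<^sub>M borel))"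
    by (rule pred_sets) (measurable, simp add: space_pair_measure)
  have E3: "emeasure M {x \<in> space M. a2 * min (h1 x) (h2 x) / (I x + \<mu> * a1 * max (h1 x) (h2 x)) > \<theta>} =
    (\<integral>\<^sup>+i. emeasure (E1 \<Otimes>\<^sub>M E1) (Pair i -` ?A3) \<partial>(distr M (borel \<Otimes>\<^sub>M borel) (\<lambda>x. (I x, 0::real))))"
  proof -
    have "emeasure M {x \<in> space M. a2 * min (h1 x) (h2 x) / (I x + \<mu> * a1 * max (h1 x) (h2 x)) > \<theta>}
      = emeasure M {x \<in> space M. ((I x, 0), (h1 x, h2 x)) \<in> ?A3}" by simp
    also have "\<dots> = (\<integral>\<^sup>+i. emeasure (E1 \<Otimes>\<^sub>M E1) (Pair i -` ?A3) \<partial>(distr M (borel \<Otimes>\<^sub>M borel) (\<lambda>x. (I x, 0::real))))"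
      using indep_slice[OF ind_I12 A3m] d12 by simp
    finally show ?thesis .
  qed
  have sl3: "Pair y -` ?A3 = {p. \<theta> < a2 * min (fst p) (snd p) / (fst y + \<mu> * a1 * max (fst p) (snd p))}" for y
    by auto
  have p3: "measure M {x \<in> space M.
            a2 * min (h1 x) (h2 x) / (I x + \<mu> * a1 * max (h1 x) (h2 x)) > \<theta>} =
         (if \<theta> * \<mu> * a1 / a2 < 1
          then (a2 - \<theta> * \<mu> * a1) / (a2 + \<theta> * \<mu> * a1)
               * LI \<alpha> \<phi>1 (2 * \<theta> / (a2 - \<theta> * \<mu> * a1))
          else 0)"
  proof (cases "\<theta> * \<mu> * a1 / a2 < 1")
    case True
    have pos: "0 < a2 - \<theta> * \<mu> * a1" using True a by (simp add: field_simps)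
    have Q: "emeasure (E1 \<Otimes>\<^sub>M E1) (Pair y -` ?A3) = ennreal ((a2 - \<theta> * \<mu> * a1) / (a2 + \<theta> * \<mu> * a1) * exp (- (2 * \<theta> / (a2 - \<theta> * \<mu> * a1)) * fst y)
        - 0 * exp (- 0 * fst y))" if "0 < fst y" for y
      unfolding sl3 EE.emeasure_eq_measure slice22[OF that a th mu] using True by simp
    have nn: "0 \<le> (a2 - \<theta> * \<mu> * a1) / (a2 + \<theta> * \<mu> * a1) * exp (- (2 * \<theta> / (a2 - \<theta> * \<mu> * a1)) * i)
        - 0 * exp (- 0 * i)" if "0 < i" for i
      using slice22[OF that a th mu] True measure_nonneg[of "E1 \<Otimes>\<^sub>M E1" "{p. \<theta> < a2 * min (fst p) (snd p) / (i + \<mu> * a1 * max (fst p) (snd p))}"]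
      by simp
    show ?thesis
      using outer[OF assms(12) Ipos assms(13,15) _ _ Ym2 measurable_fst \<phi>Y2 Q nn E3] th a pos True by simp
  next
    case False
    have Q: "emeasure (E1 \<Otimes>\<^sub>M E1) (Pair y -` ?A3) = ennreal (0 * exp (- 0 * fst y) - 0 * exp (- 0 * fst y))" if "0 < fst y" for y
      unfolding sl3 EE.emeasure_eq_measure slice22[OF that a th mu] using False by simp
    have nn: "0 \<le> 0 * exp (- 0 * i) - 0 * exp (- 0 * (i::real))" if "0 < i" for i
      by simp
    show ?thesis
      using outer[OF assms(12) Ipos assms(13,15) _ _ Ym2 measurable_fst \<phi>Y2 Q nn E3] False by simp
  qed
  show ?thesis using p1 p2 p3 by blast
qed

end
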